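(* Let $\mathcal H$ and $\mathcal H'$ be the rank-one-root affine Hecke algebras described in the context. Let $I:\mathcal H\to\mathcal H'$ be an algebra homomorphism such that $I(T_s)=c'\theta_{k(\alpha')^\vee}T_{s'}+b'$ for some $c'\in\mathbb C^\times$, $k\in\mathbb Z$, $b'\in\mathbb C[Y']$, and $I(\theta_{\alpha^\vee})=c\,\theta_{n(\alpha')^\vee}$ for some $c\in\mathbb C^\times$ and positive integer $n$. Then: if $k$ is even, $I(T_s)=\theta_{k(\alpha')^\vee/2}T_{s'}\theta_{-k(\alpha')^\vee/2}$, $I(\theta_{\alpha^\vee})=\theta_{(\alpha')^\vee}$, $q_1=q_1'$, $q_0=q_0'$; and if $k$ is odd, $I(T_s)=\theta_{(k-1)(\alpha')^\vee/2}T_{s',0}\theta_{-(k-1)(\alpha')^\vee/2}$, $I(\theta_{\alpha^\vee})=\theta_{(\alpha')^\vee}$, $q_1=q_0'$, $q_0=q_1'$, where $T_{s',0}=(q_1')^{-1/2}(q_0')^{1/2}\big(\theta_{(\alpha')^\vee}T_{s'}-(q_1'-1)\theta_{(\alpha')^\vee}\big)$.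
   Context: Let $\mathcal R=(X,R=\{\pm\alpha\},Y,R^\vee=\{\pm\alpha^\vee\},\Delta=\{\alpha\})$ and $\mathcal R'=(X',\{\pm\alpha'\},Y',\{\pm(\alpha')^\vee\},\{\alpha'\})$ be based root data (free $\mathbb Z$-modules $X,Y$ of finite rank, not necessarily of rank one, in perfect pairing, $\langle\alpha,\alpha^\vee\rangle=2$). Let $\lambda(\alpha),\lambda^*(\alpha),\lambda'(\alpha'),(\lambda^* )'(\alpha')$ be positive reals, with $\lambda(\alpha)=\lambda^*(\alpha)$ unless $\alpha\in2X$ and $\lambda'(\alpha')=(\lambda^* )'(\alpha')$ unless $\alpha'\in2X'$. Fix $\mathbf q>1$ and put $q_1=\mathbf q^{\lambda(\alpha)}$, $q_0=\mathbf q^{\lambda^*(\alpha)}$, $q_1'=\mathbf q^{\lambda'(\alpha')}$, $q_0'=\mathbf q^{(\lambda^* )'(\alpha')}$. $s=s_\alpha$, $s'=s_{\alpha'}$, with $s(y)=y-\langle\alpha,y\rangle\alpha^\vee$. $\mathcal H$ is the affine Hecke algebra: the vector space $\mathbb C[Y]\otimes\mathcal H(W_0,q)$, where $\mathbb C[Y]$ has basis $\theta_y$ ($y\in Y$), $\mathcal H(W_0,q)$ has basis $1,T_s$ with $(T_s+1)(T_s-q_1)=0$, both embedded as subalgebras, and $\theta_yT_s-T_s\theta_{s(y)}=\big((q_1-1)+\theta_{-\alpha^\vee}(q_1^{1/2}q_0^{1/2}-q_1^{1/2}q_0^{-1/2})\big)\frac{\theta_y-\theta_{s(y)}}{\theta_0-\theta_{-2\alpha^\vee}}$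 for all $y\in Y$. $\mathcal H'$ is defined in the same way from $\mathcal R',q_1',q_0'$ with generator $T_{s'}$. *)

theory Defs
  imports "HOL-Analysis.Finite_Cartesian_Product" "HOL-Library.Poly_Mapping"
begin

(* Lattices: Y = int^'n (after choosing a basis), X = int^'n via the dual basis,
   so the perfect pairing is the standard dot product. *)

type_synonym 'n lat = "int ^ 'n"
type_synonym 'n grpalg = "'n lat \<Rightarrow>\<^sub>0 complex"
(* element f + g T_s of H, with f, g in C[Y] (basis theta_y T_w) *)
type_synonym 'n hecke = "'n grpalg \<times> 'n grpalg"

definition pairing :: "'n::finite lat \<Rightarrow> 'n lat \<Rightarrow> int" where
  "pairing x y = (\<Sum>i\<in>UNIV. x $ i * y $ i)"

definition theta :: "'n::finite lat \<Rightarrow> 'n grpalg" where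
  "theta y = Poly_Mapping.single y 1"

definition cst :: "complex \<Rightarrow> 'n::finite grpalg" where
  "cst c = Poly_Mapping.single 0 c"

(* based root datum of rank-one root system {+-al}, coroots {+-alv} *)
definition root_datum :: "'n::finite lat \<Rightarrow> 'n lat \<Rightarrow> bool" where
  "root_datum al alv \<longleftrightarrow> pairing al alv = 2"

definition in2X :: "'n::finite lat \<Rightarrow> bool" where
  "in2X al \<longleftrightarrow> (\<exists>x. al = 2 *s x)"

definition sref :: "'n::finite lat \<Rightarrow> 'n lat \<Rightarrow> 'n lat \<Rightarrow> 'n lat" where
  "sref al alv y = y - pairing al y *s alv"

definition sact :: "'n::finite lat \<Rightarrow> 'n lat \<Rightarrow> 'n grpalg \<Rightarrow> 'n grpalg" where
  "sact al alv f = (\<Sum>y\<in>Poly_Mapping.keys f. Poly_Mapping.single (sref al alv y) (Poly_Mapping.lookup f y))"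

definition Gfac :: "'n::finite lat \<Rightarrow> real \<Rightarrow> real \<Rightarrow> 'n grpalg" where
  "Gfac alv q1 q0 = cst (complex_of_real (q1 - 1))
     + theta (- alv) * cst (complex_of_real (sqrt q1 * sqrt q0 - sqrt q1 / sqrt q0))"

(* the right-hand side of the Bernstein relation:
   G * (theta_y - theta_{s(y)}) / (theta_0 - theta_{-2 alv}), the quotient taken in C[Y] *)
definition bern :: "'n::finite lat \<Rightarrow> 'n lat \<Rightarrow> real \<Rightarrow> real \<Rightarrow> 'n lat \<Rightarrow> 'n grpalg" where
  "bern al alv q1 q0 y = (THE h. h * (theta 0 - theta (- (2 *s alv)))
        = Gfac alv q1 q0 * (theta y - theta (sref al alv y)))"

(* linear extension: Q(f) = sum_y f(y) bern(y); then T_s f = s(f) T_s + Q(f) *)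
definition Qop :: "'n::finite lat \<Rightarrow> 'n lat \<Rightarrow> real \<Rightarrow> real \<Rightarrow> 'n grpalg \<Rightarrow> 'n grpalg" where
  "Qop al alv q1 q0 f = (\<Sum>y\<in>Poly_Mapping.keys f. cst (Poly_Mapping.lookup f y) * bern al alv q1 q0 y)"

(* Multiplication of H, derived from: C[Y] subalgebra; (T_s+1)(T_s-q1)=0, i.e.
   T_s^2 = (q1-1) T_s + q1; and theta_y T_s - T_s theta_{s y} = bern y,
   equivalently T_s f = s(f) T_s + Q(f).
   (f1 + g1 T)(f2 + g2 T) = f1 f2 + g1 Q(f2) + q1 g1 s(g2)
                          + (f1 g2 + g1 s(f2) + g1 Q(g2) + (q1-1) g1 s(g2)) T *)
definition hmult :: "'n::finite lat \<Rightarrow> 'n lat \<Rightarrow> real \<Rightarrow> real \<Rightarrow> 'n hecke \<Rightarrow> 'n hecke \<Rightarrow> 'n hecke" where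
  "hmult al alv q1 q0 a b =
     (let f1 = fst a; g1 = snd a; f2 = fst b; g2 = snd b in
      (f1 * f2 + g1 * Qop al alv q1 q0 f2 + cst (complex_of_real q1) * g1 * sact al alv g2,
       f1 * g2 + g1 * sact al alv f2 + g1 * Qop al alv q1 q0 g2
         + cst (complex_of_real (q1 - 1)) * g1 * sact al alv g2))"

definition hadd :: "'n::finite hecke \<Rightarrow> 'n hecke \<Rightarrow> 'n hecke" where
  "hadd a b = (fst a + fst b, snd a + snd b)"

definition hscale :: "complex \<Rightarrow> 'n::finite hecke \<Rightarrow> 'n hecke" where
  "hscale c a = (cst c * fst a, cst c * snd a)"

definition emb :: "'n::finite grpalg \<Rightarrow> 'n hecke" where
  "emb f = (f, 0)"

definition Tgen :: "'n::finite hecke" where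
  "Tgen = (0, 1)"

definition hone :: "'n::finite hecke" where
  "hone = (1, 0)"

definition hecke_alg_hom ::
  "'n::finite lat \<Rightarrow> 'n lat \<Rightarrow> real \<Rightarrow> real \<Rightarrow>
   'm::finite lat \<Rightarrow> 'm lat \<Rightarrow> real \<Rightarrow> real \<Rightarrow> ('n hecke \<Rightarrow> 'm hecke) \<Rightarrow> bool" where
  "hecke_alg_hom al alv q1 q0 al' alv' q1' q0' I \<longleftrightarrow>
     (\<forall>a b. I (hadd a b) = hadd (I a) (I b)) \<and>
     (\<forall>c a. I (hscale c a) = hscale c (I a)) \<and>
     (\<forall>a b. I (hmult al alv q1 q0 a b) = hmult al' alv' q1' q0' (I a) (I b)) \<and>
     I hone = hone"

end

theory Submission
  imports Defs "HOL-Computational_Algebra.Polynomial"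
begin

lemma pm_expand:
  "(f::'a \<Rightarrow>\<^sub>0 'b::comm_monoid_add) = (\<Sum>y\<in>Poly_Mapping.keys f. Poly_Mapping.single y (Poly_Mapping.lookup f y))"
proof (rule poly_mapping_eqI)
  fix k
  show "Poly_Mapping.lookup f k = Poly_Mapping.lookup (\<Sum>y\<in>Poly_Mapping.keys f. Poly_Mapping.single y (Poly_Mapping.lookup f y)) k"
    by (simp add: lookup_sum lookup_single when_def sum.delta in_keys_iff)
qed

definition ev :: "('a \<Rightarrow> complex) \<Rightarrow> ('a \<Rightarrow>\<^sub>0 complex) \<Rightarrow> complex" where
  "ev chi f = (\<Sum>y\<in>Poly_Mapping.keys f. Poly_Mapping.lookup f y * chi y)"

lemma ev_superset:
  assumes "finite S" "Poly_Mapping.keys f \<subseteq> S"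
  shows "ev chi f = (\<Sum>y\<in>S. Poly_Mapping.lookup f y * chi y)"
  unfolding ev_def
  by (rule sum.mono_neutral_left) (use assms in \<open>auto simp: in_keys_iff\<close>)

lemma ev_add: "ev chi (f + g) = ev chi f + ev chi g"
proof -
  let ?S = "Poly_Mapping.keys f \<union> Poly_Mapping.keys g"
  have "ev chi (f + g) = (\<Sum>y\<in>?S. Poly_Mapping.lookup (f+g) y * chi y)"
    by (rule ev_superset) (auto simp: in_keys_iff lookup_add)
  also have "\<dots> = (\<Sum>y\<in>?S. Poly_Mapping.lookup f y * chi y) + (\<Sum>y\<in>?S. Poly_Mapping.lookup g y * chi y)"
    by (simp add: lookup_add distrib_right sum.distrib)
  also have "\<dots> = ev chi f + ev chi g"
    by (subst (1 2) ev_superset[where S="?S"]) auto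
  finally show ?thesis .
qed

lemma ev_zero[simp]: "ev chi 0 = 0"
  by (simp add: ev_def)

lemma ev_sum: "ev chi (\<Sum>i\<in>A. f i) = (\<Sum>i\<in>A. ev chi (f i))"
  by (induction A rule: infinite_finite_induct) (auto simp: ev_add)

lemma ev_single[simp]: "ev chi (Poly_Mapping.single y a) = a * chi y"
  by (cases "a = 0") (auto simp: ev_def)

lemma ev_uminus: "ev chi (- f) = - ev chi f"
  using ev_add[of chi f "-f"] by (simp add: add.inverse_unique)

lemma ev_diff: "ev chi (f - g) = ev chi f - ev chi g"
  using ev_add[of chi "f - g" g] by simp

lemma ev_mult:
  fixes chi :: "'a::comm_monoid_add \<Rightarrow> complex"
  assumes hom: "\<And>a b. chi (a + b) = chi a * chi b"
  shows "ev chi (f * g) = ev chi f * ev chi g"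
proof -
  have "f * g = (\<Sum>y\<in>Poly_Mapping.keys f. Poly_Mapping.single y (Poly_Mapping.lookup f y)) *
                (\<Sum>y\<in>Poly_Mapping.keys g. Poly_Mapping.single y (Poly_Mapping.lookup g y))"
    by (subst (1) pm_expand, subst (1) pm_expand[of g]) (rule refl)
  also have "\<dots> = (\<Sum>y\<in>Poly_Mapping.keys f. \<Sum>y'\<in>Poly_Mapping.keys g.
       Poly_Mapping.single (y + y') (Poly_Mapping.lookup f y * Poly_Mapping.lookup g y'))"
    by (simp add: sum_product mult_single)
  finally have "ev chi (f * g) = (\<Sum>y\<in>Poly_Mapping.keys f. \<Sum>y'\<in>Poly_Mapping.keys g.
       (Poly_Mapping.lookup f y * chi y) * (Poly_Mapping.lookup g y' * chi y'))"
    by (simp add: ev_sum hom mult_ac)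
  also have "\<dots> = ev chi f * ev chi g"
    by (simp add: ev_def sum_product)
  finally show ?thesis .
qed


lemma theta_mult: "theta a * theta b = theta (a + b)"
  by (simp add: theta_def mult_single)

lemma theta_zero[simp]: "theta 0 = 1"
  by (simp add: theta_def)

lemma cst_mult: "cst a * cst b = cst (a * b)"
  by (simp add: cst_def mult_single)

lemma cst_one[simp]: "cst 1 = 1"
  by (simp add: cst_def)

lemma cst_zero[simp]: "cst 0 = 0"
  by (simp add: cst_def)

lemma cst_add: "cst (a + b) = cst a + cst b"
  by (simp add: cst_def single_add)

lemma cst_theta: "cst a * theta y = Poly_Mapping.single y a"
  by (simp add: cst_def theta_def mult_single)

lemma ev_theta[simp]: "ev chi (theta y) = chi y"
  by (simp add: theta_def)

lemma ev_cst[simp]: "ev chi (cst a) = a * chi 0"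
  by (simp add: cst_def)

lemma pairing_add: "pairing a (x + y) = pairing a x + pairing a y"
  by (simp add: pairing_def distrib_left sum.distrib)

lemma pairing_smult: "pairing a (j *s y) = j * pairing a y"
  by (simp add: pairing_def sum_distrib_left mult_ac)

lemma pairing_uminus: "pairing a (- y) = - pairing a y"
  by (simp add: pairing_def sum_negf)

lemma pairing_diff: "pairing a (x - y) = pairing a x - pairing a y"
  by (simp add: pairing_def sum_subtractf right_diff_distrib)

lemma pairing_zero[simp]: "pairing a 0 = 0"
  by (simp add: pairing_def)

lemma pairing_sref:
  assumes "root_datum al alv"
  shows "pairing al (sref al alv y) = - pairing al y"
  using assms by (simp add: sref_def root_datum_def pairing_diff pairing_smult)

lemma sref_smult:
  assumes "root_datum al alv"
  shows "sref al alv (j *s alv) = (- j) *s alv"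
  using assms by (simp add: sref_def root_datum_def pairing_smult vector_sub_rdistrib[symmetric]
      vector_smult_assoc)

lemma sref_zero[simp]: "sref al alv 0 = 0"
  by (simp add: sref_def)

lemma alv_nz: "root_datum al alv \<Longrightarrow> alv \<noteq> 0"
  by (auto simp: root_datum_def)

lemma sact_zero[simp]: "sact al alv 0 = 0"
  by (simp add: sact_def)

lemma sact_single: "sact al alv (Poly_Mapping.single y a) = Poly_Mapping.single (sref al alv y) a"
  by (cases "a = 0") (simp_all add: sact_def)

lemma sact_cst_theta: "sact al alv (cst a * theta y) = cst a * theta (sref al alv y)"
  by (simp add: cst_theta sact_single)

lemma sact_one[simp]: "sact al alv 1 = 1"
  using sact_single[of al alv 0 1] by simp

lemma ev_sact: "ev chi (sact al alv f) = ev (\<lambda>y. chi (sref al alv y)) f"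
  by (simp only: sact_def ev_sum ev_single) (simp add: ev_def)

lemma Qop_zero[simp]: "Qop al alv q1 q0 0 = 0"
  by (simp add: Qop_def)

lemma Qop_single: "Qop al alv q1 q0 (Poly_Mapping.single y a) = cst a * bern al alv q1 q0 y"
  by (cases "a = 0") (simp_all add: Qop_def)

lemma Qop_cst_theta: "Qop al alv q1 q0 (cst a * theta y) = cst a * bern al alv q1 q0 y"
  by (simp add: cst_theta Qop_single)

lemma ev_Qop:
  fixes chi :: "'n::finite lat \<Rightarrow> complex"
  assumes hom: "\<And>a b. chi (a + b) = chi a * chi b" and "chi 0 = 1"
  shows "ev chi (Qop al alv q1 q0 f) =
     (\<Sum>y\<in>Poly_Mapping.keys f. Poly_Mapping.lookup f y * ev chi (bern al alv q1 q0 y))"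
  by (simp add: Qop_def ev_sum ev_mult[OF hom] assms(2))

lemma lookup_mult_theta: "Poly_Mapping.lookup (h * theta w) k = Poly_Mapping.lookup h (k - w)"
proof -
  have "h * theta w = (\<Sum>y\<in>Poly_Mapping.keys h. Poly_Mapping.single (y + w) (Poly_Mapping.lookup h y))"
    by (subst pm_expand) (simp add: sum_distrib_right theta_def mult_single)
  then have "Poly_Mapping.lookup (h * theta w) k =
      (\<Sum>y\<in>Poly_Mapping.keys h. if y = k - w then Poly_Mapping.lookup h y else 0)"
    by (simp add: lookup_sum lookup_single when_def eq_diff_eq)
  also have "\<dots> = Poly_Mapping.lookup h (k - w)"
    by (simp add: in_keys_iff)
  finally show ?thesis .
qed

lemma smult_inj:
  fixes w :: "int ^ 'm::finite"
  assumes "w \<noteq> 0" "i *s w = j *s w"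
  shows "i = j"
proof -
  from assms(1) obtain t where "w $ t \<noteq> 0" by (metis vec_eq_iff zero_index)
  moreover from assms(2) have "i * w $ t = j * w $ t" by (metis vector_smult_component)
  ultimately show ?thesis by simp
qed

lemma cancel_shift:
  fixes h :: "'m::finite grpalg"
  assumes "w \<noteq> 0" "h * (1 - theta w) = 0"
  shows "h = 0"
proof (rule ccontr)
  assume "h \<noteq> 0"
  then obtain k where k: "Poly_Mapping.lookup h k \<noteq> 0"
    by (metis poly_mapping_eqI lookup_zero)
  have eq: "Poly_Mapping.lookup h y = Poly_Mapping.lookup h (y - w)" for y
  proof -
    from assms(2) have "h = h * theta w" by (simp add: algebra_simps)
    then show ?thesis by (metis lookup_mult_theta)
  qed
  have all: "Poly_Mapping.lookup h (k - int m *s w) = Poly_Mapping.lookup h k" for m :: nat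
  proof (induction m)
    case 0 then show ?case by simp
  next
    case (Suc m)
    have e: "k - int (Suc m) *s w = (k - int m *s w) - w"
      by (simp add: vector_sadd_rdistrib algebra_simps)
    show ?case by (simp only: e) (metis eq Suc.IH)
  qed
  have "(\<lambda>m::nat. k - int m *s w) ` UNIV \<subseteq> Poly_Mapping.keys h"
    using all k by (auto simp: in_keys_iff)
  moreover have "inj (\<lambda>m::nat. k - int m *s w)"
    by (rule injI) (use smult_inj[OF assms(1)] in force)
  ultimately have "finite (UNIV :: nat set)"
    by (metis finite_imageD finite_keys finite_subset)
  then show False by simp
qed

lemma two_smult: "(2::int) *s x = x + x"
  by (simp add: vec_eq_iff)

lemma pairing_smult_left: "pairing (j *s a) y = j * pairing a y"
  by (simp add: pairing_def sum_distrib_left mult_ac)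

lemma bern_unique:
  assumes rd: "root_datum al alv"
    and h: "h * (theta 0 - theta (- (2 *s alv))) = Gfac alv q1 q0 * (theta y - theta (sref al alv y))"
  shows "bern al alv q1 q0 y = h"
  unfolding bern_def
proof (rule the_equality)
  fix h'
  assume h': "h' * (theta 0 - theta (- (2 *s alv))) = Gfac alv q1 q0 * (theta y - theta (sref al alv y))"
  have w: "- (2 *s alv) \<noteq> 0" using alv_nz[OF rd] by simp
  have "(h' - h) * (1 - theta (- (2 *s alv))) =
     h' * (theta 0 - theta (- (2 *s alv))) - h * (theta 0 - theta (- (2 *s alv)))"
    by (simp add: algebra_simps)
  also have "\<dots> = 0" using h h' by simp
  finally have "(h' - h) * (1 - theta (- (2 *s alv))) = 0" .
  then have "h' - h = 0" by (rule cancel_shift[OF w])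
  then show "h' = h" by simp
qed (rule h)

lemma geo_nat: "\<exists>h. 1 - theta (int m *s w) = h * (1 - theta w)"
proof (induction m)
  case 0 show ?case by (rule exI[of _ 0]) simp
next
  case (Suc m)
  then obtain h where h: "1 - theta (int m *s w) = h * (1 - theta w)" by blast
  have "1 - theta (int (Suc m) *s w) = (1 - theta (int m *s w)) + theta (int m *s w) * (1 - theta w)"
    by (simp add: algebra_simps theta_mult vector_sadd_rdistrib)
  also have "\<dots> = (h + theta (int m *s w)) * (1 - theta w)"
    by (simp add: h algebra_simps)
  finally show ?case by blast
qed

lemma geo: "\<exists>h. 1 - theta (m *s w) = h * (1 - theta w)"
proof (cases "m \<ge> 0")
  case True
  then show ?thesis using geo_nat[of "nat m" w] by simp
next
  case False
  obtain h where h: "1 - theta (int (nat (- m)) *s w) = h * (1 - theta w)" using geo_nat by blast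
  have e: "int (nat (- m)) = - m" using False by simp
  have "1 - theta (m *s w) = - theta (m *s w) * (1 - theta ((- m) *s w))"
    by (simp add: algebra_simps theta_mult vector_sadd_rdistrib[symmetric])
  also have "\<dots> = (- theta (m *s w) * h) * (1 - theta w)"
    using h e by simp
  finally show ?thesis by blast
qed

lemma bern_exists:
  assumes rd: "root_datum al alv" and eq: "\<not> in2X al \<Longrightarrow> q1 = q0" and q1: "q1 > 0"
  shows "\<exists>h. h * (theta 0 - theta (- (2 *s alv))) = Gfac alv q1 q0 * (theta y - theta (sref al alv y))"
proof -
  define p where "p = pairing al y"
  have s: "theta y - theta (sref al alv y) = theta y * (1 - theta (- (p *s alv)))"
    by (simp add: sref_def p_def algebra_simps theta_mult)
  show ?thesis
  proof (cases "even p")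
    case True
    then obtain j where j: "p = 2 * j" by blast
    have e: "- (p *s alv) = j *s (- (2 *s alv))"
      by (simp add: j vector_smult_assoc vector_smult_rneg mult.commute)
    obtain h where h: "1 - theta (j *s (- (2 *s alv))) = h * (1 - theta (- (2 *s alv)))"
      using geo by blast
    show ?thesis
      by (rule exI[of _ "Gfac alv q1 q0 * theta y * h"]) (simp add: s e h mult_ac)
  next
    case False
    have n2: "\<not> in2X al"
    proof
      assume "in2X al"
      then obtain x where "al = 2 *s x" by (auto simp: in2X_def)
      then have "p = 2 * pairing x y" by (simp add: p_def pairing_smult_left)
      with False show False by simp
    qed
    have qq: "q1 = q0" using eq[OF n2] .
    have G: "Gfac alv q1 q0 = cst (complex_of_real (q1 - 1)) * (1 + theta (- alv))"
      using q1 by (simp add: Gfac_def qq algebra_simps cst_mult)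
    have e: "- (p *s alv) = p *s (- alv)"
      by (simp add: vector_smult_rneg)
    obtain h where h: "1 - theta (p *s (- alv)) = h * (1 - theta (- alv))"
      using geo by blast
    have D: "theta 0 - theta (- (2 *s alv)) = (1 + theta (- alv)) * (1 - theta (- alv))"
      by (simp add: algebra_simps theta_mult two_smult)
    show ?thesis
      by (rule exI[of _ "cst (complex_of_real (q1 - 1)) * theta y * h"])
        (simp only: s e h G D mult_ac)
  qed
qed

lemma bern_spec:
  assumes rd: "root_datum al alv" and eq: "\<not> in2X al \<Longrightarrow> q1 = q0" and q1: "q1 > 0"
  shows "bern al alv q1 q0 y * (theta 0 - theta (- (2 *s alv))) = Gfac alv q1 q0 * (theta y - theta (sref al alv y))"
proof -
  obtain h where h: "h * (theta 0 - theta (- (2 *s alv))) = Gfac alv q1 q0 * (theta y - theta (sref al alv y))"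
    using bern_exists[OF assms] by blast
  show ?thesis using bern_unique[OF rd h] h by simp
qed

lemma hmult_pair:
  "hmult al alv q1 q0 (f1, g1) (f2, g2) =
     (f1 * f2 + g1 * Qop al alv q1 q0 f2 + cst (complex_of_real q1) * g1 * sact al alv g2,
      f1 * g2 + g1 * sact al alv f2 + g1 * Qop al alv q1 q0 g2
         + cst (complex_of_real (q1 - 1)) * g1 * sact al alv g2)"
  by (simp add: hmult_def)

lemma hmult_emb_left: "hmult al alv q1 q0 (emb h) (f, g) = (h * f, h * g)"
  by (simp add: hmult_def emb_def)

lemma hmult_emb_right: "hmult al alv q1 q0 (f, g) (emb h) = (f * h + g * Qop al alv q1 q0 h, g * sact al alv h)"
  by (simp add: hmult_def emb_def)

lemma hmult_emb_emb: "hmult al alv q1 q0 (emb f) (emb g) = emb (f * g)"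
  by (simp add: hmult_def emb_def)

lemma bern_zero:
  assumes "root_datum al alv"
  shows "bern al alv q1 q0 0 = 0"
  by (rule bern_unique[OF assms]) simp

lemma bern_alv:
  assumes rd: "root_datum al alv"
  shows "bern al alv q1 q0 alv = Gfac alv q1 q0 * theta alv"
proof (rule bern_unique[OF rd])
  have s: "sref al alv alv = - alv"
    using rd by (simp add: sref_def root_datum_def two_smult)
  show "Gfac alv q1 q0 * theta alv * (theta 0 - theta (- (2 *s alv))) =
      Gfac alv q1 q0 * (theta alv - theta (sref al alv alv))"
  proof -
    have t: "theta alv * theta (- (2 *s alv)) = theta (- alv)"
      by (simp add: theta_mult two_smult algebra_simps)
    show ?thesis by (simp add: s right_diff_distrib mult.assoc t)
  qed
qed

lemma H_rel1:
  assumes rd: "root_datum al alv"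
  shows "hmult al alv q1 q0 (hmult al alv q1 q0 (emb (theta alv)) Tgen) (emb (theta alv)) =
    hadd Tgen (hadd (hscale (complex_of_real (q1 - 1)) (hmult al alv q1 q0 (emb (theta alv)) (emb (theta alv))))
       (hscale (complex_of_real (sqrt q1 * sqrt q0 - sqrt q1 / sqrt q0)) (emb (theta alv))))"
proof -
  have s: "sref al alv alv = - alv"
    using rd by (simp add: sref_def root_datum_def two_smult)
  have q: "Qop al alv q1 q0 (theta alv) = Gfac alv q1 q0 * theta alv"
    using Qop_cst_theta[of al alv q1 q0 1 alv] bern_alv[OF rd, of q1 q0] by simp
  have sa: "sact al alv (theta alv) = theta (- alv)"
    using sact_cst_theta[of al alv 1 alv] s by simp
  have m: "theta alv * theta (- alv) = 1" by (simp add: theta_mult)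
  show ?thesis
  proof -
    have m': "theta (- alv) * theta alv = 1" by (simp add: theta_mult)
    have g: "Gfac alv q1 q0 * theta alv = cst (complex_of_real (q1 - 1)) * theta alv
        + cst (complex_of_real (sqrt q1 * sqrt q0 - sqrt q1 / sqrt q0))"
    proof -
      have "Gfac alv q1 q0 * theta alv = cst (complex_of_real (q1 - 1)) * theta alv
        + cst (complex_of_real (sqrt q1 * sqrt q0 - sqrt q1 / sqrt q0)) * (theta (- alv) * theta alv)"
        unfolding Gfac_def by (simp add: algebra_simps)
      then show ?thesis by (simp add: m')
    qed
    show ?thesis
      unfolding emb_def Tgen_def hadd_def hscale_def
      by (simp add: hmult_pair q sa m mult.assoc g distrib_left mult.left_commute[of "theta alv"])
  qed
qed

lemma H_rel2:
  assumes rd: "root_datum al alv"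
  shows "hmult al alv q1 q0 Tgen Tgen =
    hadd (hscale (complex_of_real (q1 - 1)) Tgen) (hscale (complex_of_real q1) hone)"
proof -
  have q: "Qop al alv q1 q0 1 = 0"
    using Qop_cst_theta[of al alv q1 q0 1 0] bern_zero[OF rd, of q1 q0] by simp
  show ?thesis
    by (simp add: Tgen_def hone_def hmult_pair hadd_def hscale_def q)
qed

lemma core:
  fixes X Y P c c' B Bt W Wt Qb Q1 D Q1' E :: complex
  assumes X: "X \<noteq> 0" and Y: "Y \<noteq> 0" and P: "P \<noteq> 0" and X2: "X^2 \<noteq> 1" and Y2: "Y^2 \<noteq> 1"
    and c: "c^2 = 1"
    and e1: "c*Y*B*(c*Y) + c*Y*(c'*P)*(c*W) = B + ((Q1-1)*(c*Y*(c*Y)) + D*(c*Y))"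
    and e1t: "c*inverse Y*Bt*(c*inverse Y) + c*inverse Y*(c'*inverse P)*(c*Wt)
              = Bt + ((Q1-1)*(c*inverse Y*(c*inverse Y)) + D*(c*inverse Y))"
    and Wd: "W * (1 - inverse X^2) = (Q1' - 1 + inverse X * E) * (Y - inverse Y)"
    and Wtd: "Wt * (1 - X^2) = (Q1' - 1 + X * E) * (inverse Y - Y)"
    and e2: "B*B + c'*P*Qb + Q1'*(c'*P)*(c'*inverse P) = (Q1-1)*B + Q1"
    and Qd: "Qb * (1 - inverse X^2) = (Q1' - 1 + inverse X * E) * (B - Bt)"
  shows "c'^2 * ((Q1' - (Q1' - 1 + inverse X * E) / (1 - inverse X^2)) *
                 (1 + (Q1' - 1 + inverse X * E) / (1 - inverse X^2)))
       = (Q1 - ((Q1-1)*Y^2 + D*c*Y)/(Y^2-1)) * (1 + ((Q1-1)*Y^2 + D*c*Y)/(Y^2-1))"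
proof -
  define r where "r = (Q1' - 1 + inverse X * E) / (1 - inverse X^2)"
  define rt where "rt = (Q1' - 1 + X * E) / (1 - X^2)"
  define \<rho> where "\<rho> = ((Q1-1)*Y^2 + D*c*Y)/(Y^2-1)"
  define \<rho>t where "\<rho>t = Q1 - 1 - \<rho>"
  have dX: "1 - inverse X^2 \<noteq> 0" using X X2 by (auto simp: field_simps)
  have dX': "1 - X^2 \<noteq> 0" using X2 by auto
  have dY: "Y^2 - 1 \<noteq> 0" using Y2 by auto
  have dY': "inverse Y^2 - 1 \<noteq> 0" using Y Y2 by (auto simp: field_simps)
  have W: "W = r * (Y - inverse Y)" using Wd dX by (simp add: r_def field_simps)
  have Wt: "Wt = rt * (inverse Y - Y)" using Wtd dX' by (simp add: rt_def field_simps)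
  have Q: "Qb = r * (B - Bt)" using Qd dX by (simp add: r_def field_simps)
  have B: "B = \<rho> - c' * P * r"
  proof -
    have "B * (Y^2 - 1) = (Q1-1)*Y^2 + D*c*Y - c'*P*r*(Y^2-1)"
    proof -
      have iY: "Y * inverse Y = 1" using Y by simp
      show ?thesis using e1 c iY unfolding W by algebra
    qed
    then show ?thesis using dY by (simp add: \<rho>_def field_simps)
  qed
  have Bt: "Bt = \<rho>t - c' * inverse P * rt"
  proof -
    have bt0: "Bt * (inverse Y^2 - 1) = (Q1-1)*inverse Y^2 + D*c*inverse Y - c'*inverse P*rt*(inverse Y^2-1)"
    proof -
      have iY: "Y * inverse Y = 1" using Y by simp
      show ?thesis using e1t c iY unfolding Wt by algebra
    qed
    have h1: "\<rho>*(Y^2-1) = (Q1-1)*Y^2 + D*c*Y" using dY by (simp add: \<rho>_def)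
    have h2: "(inverse Y^2 - 1) * inverse (inverse Y^2 - 1) = 1" using dY' by simp
    have h3: "(Y^2 - 1) * inverse (Y^2 - 1) = 1" using dY by simp
    have iY: "Y * inverse Y = 1" using Y by simp
    show ?thesis unfolding \<rho>t_def using bt0 h1 h2 h3 iY by algebra
  qed
  have sr: "rt = Q1' - 1 - r"
    using dX dX' X unfolding r_def rt_def by (simp add: field_simps) (simp add: algebra_simps power2_eq_square eval_nat_numeral)
  have s\<rho>: "\<rho>t = Q1 - 1 - \<rho>" by (simp add: \<rho>t_def)
  have "c'^2 * ((Q1' - r) * (1 + r)) = (Q1 - \<rho>) * (1 + \<rho>)"
  proof -
    have iP: "P * inverse P = 1" using P by simp
    from e2 have "(\<rho> - c' * P * r)*(\<rho> - c' * P * r) + c'*P*(r * ((\<rho> - c' * P * r) - ((Q1 - 1 - \<rho>) - c' * inverse P * (Q1' - 1 - r))))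
        + Q1'*(c'*P)*(c'*inverse P) = (Q1-1)*(\<rho> - c' * P * r) + Q1"
      unfolding Q B[symmetric] using Bt sr s\<rho> by simp
    then show ?thesis using iP by algebra
  qed
  then show ?thesis unfolding r_def \<rho>_def .
qed

definition Fq :: "complex \<Rightarrow> complex \<Rightarrow> complex \<Rightarrow> complex" where
  "Fq U1 U0 t = (t - U1) * (t + U0) * (U1 * t - 1) * (U0 * t + 1)"

definition Fpoly :: "complex \<Rightarrow> complex \<Rightarrow> complex poly" where
  "Fpoly U1 U0 = [:-U1, 1:] * [:U0, 1:] * [:-1, U1:] * [:1, U0:]"

lemma poly_Fpoly[simp]: "poly (Fpoly U1 U0) t = Fq U1 U0 t"
  by (simp add: Fpoly_def Fq_def algebra_simps)

lemma poly_ext: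
  fixes p :: "complex poly"
  assumes "\<And>r::real. r > 1 \<Longrightarrow> poly p (of_real r) = 0"
  shows "poly p x = 0"
proof (cases "p = 0")
  case True then show ?thesis by simp
next
  case False
  have "of_real ` {1<..} \<subseteq> {x. poly p x = 0}" using assms by auto
  moreover have "infinite (of_real ` {1<..} :: complex set)"
  proof
    assume "finite (of_real ` {1<..} :: complex set)"
    then have "finite {(1::real)<..}"
      by (rule finite_imageD) (simp add: inj_on_def)
    then show False using infinite_Ioi by blast
  qed
  ultimately show ?thesis using poly_roots_finite[OF False] finite_subset by blast
qed

lemma rho_fact:
  fixes U1 U0 c Y :: complex
  assumes "c^2 = 1" "Y^2 \<noteq> 1"
  shows "(U1*U0 - ((U1*U0-1)*Y^2 + (U1-U0)*c*Y)/(Y^2-1)) * (1 + ((U1*U0-1)*Y^2 + (U1-U0)*c*Y)/(Y^2-1))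
    = Fq U1 U0 (c*Y) / (Y^2-1)^2"
proof -
  have d: "Y^2 - 1 \<noteq> 0" using assms by simp
  have "(U1*U0 - ((U1*U0-1)*Y^2 + (U1-U0)*c*Y)/(Y^2-1)) = (c*Y - U1) * (c*Y + U0) / (Y^2-1)"
    using d assms(1) by (simp add: field_simps) (simp add: algebra_simps power2_eq_square)
  moreover have "(1 + ((U1*U0-1)*Y^2 + (U1-U0)*c*Y)/(Y^2-1)) = (U1*(c*Y) - 1) * (U0*(c*Y) + 1) / (Y^2-1)"
    using d assms(1) by (simp add: field_simps) (simp add: algebra_simps power2_eq_square)
  ultimately show ?thesis by (simp add: Fq_def power2_eq_square)
qed

lemma Fq_real: "Fq (of_real a) (of_real b) (of_real t) = of_real ((t - a) * (t + b) * (a * t - 1) * (b * t + 1))"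
  by (simp add: Fq_def)

lemma Fq_real_zero: "Fq (of_real a) (of_real b) (of_real t) = 0 \<longleftrightarrow> t = a \<or> t = - b \<or> a * t = 1 \<or> b * t = -1"
  unfolding Fq_real of_real_eq_0_iff mult_eq_0_iff by (auto simp: eq_neg_iff_add_eq_0)

lemma Fq_one: "Fq (of_real a) (of_real b) 1 = 0 \<longleftrightarrow> a = 1 \<or> b = -1"
  using Fq_real_zero[of a b 1] by auto

lemma Fq_mone: "Fq (of_real a) (of_real b) (-1) = 0 \<longleftrightarrow> a = -1 \<or> b = 1"
  using Fq_real_zero[of a b "-1"] by auto

lemma of_real_pow_ne1:
  assumes "(r::real) > 1" "m > 0"
  shows "(of_real r :: complex) ^ m \<noteq> 1"
proof -
  have "r ^ m > 1" using assms by (simp add: one_less_power)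
  then show ?thesis by (metis of_real_eq_1_iff of_real_power less_irrefl)
qed

lemma cis_ne1_aux:
  assumes n: "n > 0" and k: "k > 0" and eq: "cis (2 * (k * pi / real n)) = 1"
  shows "\<exists>m::int. real_of_int m * real n = k"
proof -
  have "cos (2 * (k * pi / real n)) = 1" using eq by (metis cis.sel(1) one_complex.sel(1))
  then obtain m :: int where m: "2 * (k * pi / real n) = real_of_int m * 2 * pi"
    unfolding cos_one_2pi_int by blast
  have a: "2 * (k * pi / real n) * real n = 2 * pi * k" using n by simp
  have "(real_of_int m * real n) * (2 * pi) = k * (2 * pi)"
    using a unfolding m by (simp add: algebra_simps)
  then have "real_of_int m * real n = k" using pi_gt_zero by (simp only: mult_right_cancel)
  then show ?thesis by blast
qed

lemma cis_sq_ne1: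
  assumes "n \<ge> 2"
  shows "cis (pi / real n) ^ 2 \<noteq> 1"
proof
  assume "cis (pi / real n) ^ 2 = 1"
  moreover have "cis (pi / real n) ^ 2 = cis (2 * (1 * pi / real n))"
    unfolding DeMoivre by simp
  ultimately have "cis (2 * (1 * pi / real n)) = 1" by simp
  moreover have "n > 0" "(1::real) > 0" using assms by auto
  ultimately obtain m :: int where "real_of_int m * real n = 1"
    using cis_ne1_aux[of n 1] by blast
  then have "real_of_int (m * int n) = real_of_int 1" by simp
  then have "m * int n = 1" by (simp only: of_int_eq_iff)
  then have "int n dvd 1" unfolding dvd_def by (metis mult.commute)
  then have "int n = 1" by simp
  with assms show False by simp
qed

lemma cis_sq_ne1':
  assumes "n \<ge> 3"
  shows "cis (2 * pi / real n) ^ 2 \<noteq> 1"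
proof
  assume "cis (2 * pi / real n) ^ 2 = 1"
  moreover have "cis (2 * pi / real n) ^ 2 = cis (2 * (2 * pi / real n))"
    unfolding DeMoivre by simp
  ultimately have "cis (2 * (2 * pi / real n)) = 1" by simp
  moreover have "n > 0" "(2::real) > 0" using assms by auto
  ultimately obtain m :: int where "real_of_int m * real n = 2"
    using cis_ne1_aux[of n 2] by blast
  then have "real_of_int (m * int n) = real_of_int 2" by simp
  then have "m * int n = 2" by (simp only: of_int_eq_iff)
  then have "int n dvd 2" unfolding dvd_def by (metis mult.commute)
  then have "int n \<le> 2" by (rule zdvd_imp_le) simp
  with assms show False by simp
qed

lemma gt1_aux:
  fixes a b :: real
  assumes "a > 0" "b * a > 1" "b > a"
  shows "b > 1"
proof (rule ccontr)
  assume "\<not> b > 1"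
  then have "b * a \<le> 1 * 1" using assms by (intro mult_mono) auto
  then show False using assms by simp
qed

lemma n_is_1:
  fixes u1 u0 v1 v0 :: real and c c' :: complex and n :: nat
  assumes pos: "u0 > 0" "v0 > 0" "u1 * u0 > 1" "u1 > u0" "v1 * v0 > 1" "v1 > v0"
    and c: "c^2 = 1" and c': "c' \<noteq> 0" and n: "n > 0"
    and Id: "\<And>X. X \<noteq> 0 \<Longrightarrow> X^2 \<noteq> 1 \<Longrightarrow> X^(2*n) \<noteq> 1 \<Longrightarrow>
       c'^2 * Fq (of_real v1) (of_real v0) X * (X^(2*n) - 1)^2 = Fq (of_real u1) (of_real u0) (c * X^n) * (X^2 - 1)^2"
  shows "n = 1"
proof -
  have u1: "u1 > 1" using gt1_aux[of u0 u1] pos by simp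
  have v1: "v1 > 1" using gt1_aux[of v0 v1] pos by simp
  let ?F = "Fq (of_real u1) (of_real u0)" and ?G = "Fq (of_real v1) (of_real v0)"
  have IdA: "c'^2 * ?G X * (X^(2*n) - 1)^2 = ?F (c * X^n) * (X^2 - 1)^2" for X
  proof -
    let ?p = "smult (c'^2) (Fpoly (of_real v1) (of_real v0) * (monom 1 (2*n) - 1)^2)
        - pcompose (Fpoly (of_real u1) (of_real u0)) (monom c n) * (monom 1 2 - 1)^2"
    have pe: "poly ?p x = c'^2 * ?G x * (x^(2*n) - 1)^2 - ?F (c * x^n) * (x^2 - 1)^2" for x
      by (simp add: poly_pcompose poly_monom mult_ac)
    have "poly ?p X = 0"
    proof (rule poly_ext)
      fix r :: real assume r: "r > 1"
      have "(of_real r :: complex) \<noteq> 0" using r by simp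
      moreover have "(of_real r :: complex)^2 \<noteq> 1" by (rule of_real_pow_ne1[OF r]) simp
      moreover have "(of_real r :: complex)^(2*n) \<noteq> 1" by (rule of_real_pow_ne1[OF r]) (use n in simp)
      ultimately show "poly ?p (of_real r) = 0" unfolding pe using Id by simp
    qed
    then show ?thesis unfolding pe by simp
  qed
  have F1: "?F 1 \<noteq> 0" using u1 pos by (simp add: Fq_one)
  have cc: "c = 1 \<or> c = -1" using c by (metis power2_eq_1_iff)
  show "n = 1"
  proof (rule ccontr)
    assume "n \<noteq> 1"
    then have n2: "n \<ge> 2" using n by simp
    define X1 where "X1 = cis (pi / real n)"
    have X1n: "X1 ^ n = -1" using n by (simp add: X1_def DeMoivre)
    have X12: "X1^2 - 1 \<noteq> 0" using cis_sq_ne1[OF n2] by (simp add: X1_def)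
    have X12n: "X1^(2*n) = 1" by (simp add: power_mult_distrib mult.commute[of 2 n] power_mult X1n)
    have Fmc: "?F (- c) = 0" using IdA[of X1] X12 by (simp add: X12n X1n)
    have "c = 1" using Fmc cc F1 by auto
    then have "?F (-1) = 0" using Fmc by simp
    then have u0: "u0 = 1" using u1 by (simp add: Fq_mone)
    show False
    proof (cases "n = 2")
      case True
      define r where "r = sqrt u1"
      have r: "r > 1" "r^2 = u1" using u1 by (auto simp: r_def)
      have r4: "(of_real r :: complex)^4 \<noteq> 1" by (rule of_real_pow_ne1[OF r(1)]) simp
      have r2: "(of_real r :: complex)^2 \<noteq> 1" by (rule of_real_pow_ne1[OF r(1)]) simp
      have Fu1: "?F (of_real u1) = 0" by (simp add: Fq_def)
      have "?G (of_real r) = 0"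
      proof -
        have "c'^2 * ?G (of_real r) * ((of_real r)^4 - 1)^2 = 0"
          using IdA[of "of_real r"] True \<open>c = 1\<close> Fu1 r(2) by (simp flip: of_real_power)
        then show ?thesis using c' r4 by simp
      qed
      moreover have "v0 * r > 0" "v1 * r > 0" using r pos v1 by auto
      ultimately have A: "r = v1 \<or> v1 * r = 1" using r v1 pos by (auto simp: Fq_real_zero)
      have "?G (- of_real r) = 0"
      proof -
        have "c'^2 * ?G (- of_real r) * ((of_real r)^4 - 1)^2 = 0"
          using IdA[of "- of_real r"] True \<open>c = 1\<close> Fu1 r(2) by (simp flip: of_real_power)
        then show ?thesis using c' r4 by simp
      qed
      then have "?G (of_real (- r)) = 0" by simp
      then have "- r = v1 \<or> - r = - v0 \<or> v1 * (- r) = 1 \<or> v0 * (- r) = -1"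
        using Fq_real_zero[of v1 v0 "- r"] by blast
      moreover have "v0 * r > 0" "v1 * r > 0" using r pos v1 by auto
      ultimately have B: "r = v0 \<or> v0 * r = 1" using r v1 pos by auto
      show False using A B
      proof (elim disjE)
        assume "r = v1" "r = v0" then show False using pos by simp
      next
        assume "r = v1" "v0 * r = 1" then show False using pos by (simp add: mult.commute)
      next
        assume "v1 * r = 1" "r = v0" then show False using pos by simp
      next
        assume "v1 * r = 1" "v0 * r = 1"
        then have "v1 * r = v0 * r" by simp
        then show False using pos r by simp
      qed
    next
      case False
      then have n3: "n \<ge> 3" using n2 by simp
      define X2 where "X2 = cis (2 * pi / real n)"
      have X2n: "X2 ^ n = 1" using n by (simp add: X2_def DeMoivre)
      have X22: "X2^2 - 1 \<noteq> 0" using cis_sq_ne1'[OF n3] by (simp add: X2_def)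
      have X22n: "X2^(2*n) = 1" by (simp add: mult.commute[of 2 n] power_mult X2n)
      have "?F c = 0" using IdA[of X2] X22 by (simp add: X22n X2n)
      then show False using \<open>c = 1\<close> F1 by simp
    qed
  qed
qed

lemma gt1_mult: "(a::real) > 1 \<Longrightarrow> b > 1 \<Longrightarrow> a * b > 1"
  using mult_strict_mono[of 1 a 1 b] by simp

lemma roots1:
  fixes u1 u0 v1 v0 :: real and c c' :: complex
  assumes pos: "u0 > 0" "v0 > 0" "u1 * u0 > 1" "u1 > u0" "v1 * v0 > 1" "v1 > v0"
    and c: "c^2 = 1" and c': "c' \<noteq> 0"
    and Id: "\<And>X. X \<noteq> 0 \<Longrightarrow> X^2 \<noteq> 1 \<Longrightarrow>
       c'^2 * Fq (of_real v1) (of_real v0) X * (X^2 - 1)^2 = Fq (of_real u1) (of_real u0) (c * X) * (X^2 - 1)^2"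
  shows "c = 1 \<and> u1 = v1 \<and> (u0 = v0 \<or> u0 * v0 = 1)"
proof -
  have u1: "u1 > 1" using gt1_aux[of u0 u1] pos by simp
  have v1: "v1 > 1" using gt1_aux[of v0 v1] pos by simp
  let ?F = "Fq (of_real u1) (of_real u0)" and ?G = "Fq (of_real v1) (of_real v0)"
  have IdA: "c'^2 * ?G X = ?F (c * X)" for X
  proof -
    let ?p = "smult (c'^2) (Fpoly (of_real v1) (of_real v0)) - pcompose (Fpoly (of_real u1) (of_real u0)) [:0, c:]"
    have pe: "poly ?p x = c'^2 * ?G x - ?F (c * x)" for x
      by (simp only: poly_diff poly_smult poly_pcompose poly_Fpoly) (simp add: mult.commute)
    have "poly ?p X = 0"
    proof (rule poly_ext)
      fix r :: real assume r: "r > 1"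
      have "(of_real r :: complex) \<noteq> 0" using r by simp
      moreover have r2: "(of_real r :: complex)^2 \<noteq> 1" by (rule of_real_pow_ne1[OF r]) simp
      ultimately have "c'^2 * ?G (of_real r) * ((of_real r)^2 - 1)^2 = ?F (c * of_real r) * ((of_real r)^2 - 1)^2"
        using Id by blast
      then show "poly ?p (of_real r) = 0" unfolding pe using r2 by simp
    qed
    then show ?thesis unfolding pe by simp
  qed
  have cc: "c = 1 \<or> c = -1" using c by (metis power2_eq_1_iff)
  have cc2: "c * c = 1" using c by (simp add: power2_eq_square)
  have Fu1: "?F (of_real u1) = 0" by (simp add: Fq_def)
  have Fu0: "?F (- of_real u0) = 0" by (simp add: Fq_def)
  have G1: "?G (c * of_real u1) = 0"
    using IdA[of "c * of_real u1"] c' Fu1 by (simp add: mult.assoc[symmetric] cc2)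
  have G0: "?G (- (c * of_real u0)) = 0"
    using IdA[of "- (c * of_real u0)"] c' Fu0 by (simp add: mult.assoc[symmetric] cc2)
  have pu: "v1 * u1 > 1" using gt1_mult[OF v1 u1] .
  have p1: "v0 * u1 > 0" "v0 * u0 > 0" "v1 * u0 > 0" using pos u1 v1 by auto
  show ?thesis
  proof (cases "c = 1")
    case True
    from G1 True have "?G (of_real u1) = 0" by simp
    then have "u1 = v1 \<or> u1 = - v0 \<or> v1 * u1 = 1 \<or> v0 * u1 = -1"
      using Fq_real_zero[of v1 v0 u1] by blast
    then have A: "u1 = v1" using pu p1 pos u1 by auto
    from G0 True have "?G (of_real (- u0)) = 0" by simp
    then have "- u0 = v1 \<or> - u0 = - v0 \<or> v1 * (- u0) = 1 \<or> v0 * (- u0) = -1"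
      using Fq_real_zero[of v1 v0 "- u0"] by blast
    then have B: "u0 = v0 \<or> u0 * v0 = 1"
    proof (elim disjE)
      assume "v1 * (- u0) = 1" then have "v1 * u0 = -1" by simp
      then show ?thesis using p1 by simp
    next
      assume "v0 * (- u0) = -1" then have "v0 * u0 = 1" by simp
      then show ?thesis by (simp add: mult.commute)
    qed (use pos v1 in auto)
    show ?thesis using True A B by simp
  next
    case False
    then have cm: "c = -1" using cc by simp
    from G1 cm have "?G (of_real (- u1)) = 0" by simp
    then have "- u1 = v1 \<or> - u1 = - v0 \<or> v1 * (- u1) = 1 \<or> v0 * (- u1) = -1"
      using Fq_real_zero[of v1 v0 "- u1"] by blast
    then have A: "u1 = v0 \<or> v0 * u1 = 1" using pu p1 pos u1 v1 by auto
    from G0 cm have "?G (of_real u0) = 0" by simp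
    then have "u0 = v1 \<or> u0 = - v0 \<or> v1 * u0 = 1 \<or> v0 * u0 = -1"
      using Fq_real_zero[of v1 v0 u0] by blast
    then have B: "u0 = v1 \<or> v1 * u0 = 1" using p1 pos by auto
    have False using A B
    proof (elim disjE)
      assume "u1 = v0" "u0 = v1" then show False using pos by simp
    next
      assume a: "u1 = v0" "v1 * u0 = 1"
      have "v1 * u0 > u1 * u0" using pos a by (intro mult_strict_right_mono) auto
      then show False using a pos by simp
    next
      assume a: "v0 * u1 = 1" "u0 = v1"
      have h1: "u1 * v0 > u0 * v0" using pos a by (intro mult_strict_right_mono) auto
      have h2: "u0 * v0 > 1" using a(2) pos(5) by simp
      have h3: "u1 * v0 = 1" using a(1) by (simp add: mult.commute)
      show False using h1 h2 h3 by linarith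
    next
      assume a: "v0 * u1 = 1" "v1 * u0 = 1"
      have "(v1 * v0) * (u1 * u0) > 1" using gt1_mult pos by blast
      moreover have "(v1 * v0) * (u1 * u0) = (v0 * u1) * (v1 * u0)" by (simp add: mult_ac)
      ultimately show False using a by simp
    qed
    then show ?thesis ..
  qed
qed

lemma final_params:
  fixes u1 u0 v1 v0 :: real and c' :: complex and k :: int
  assumes pos: "u0 > 0" "v0 > 0" "v1 > 1"
    and uv: "u1 = v1" and alt: "u0 = v0 \<or> u0 * v0 = 1"
    and R1: "c' * of_real ((v1 - 1) * (v0 + 1)) = of_real ((u1 - 1) * (u0 + 1))"
    and R2: "c' * (if even k then 1 else -1) * of_real ((v0 - 1) * (v1 + 1)) = of_real ((u0 - 1) * (u1 + 1))"
  shows "(even k \<longrightarrow> c' = 1 \<and> u0 = v0) \<and> (odd k \<longrightarrow> c' = of_real (1 / v0) \<and> u0 * v0 = 1)"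
proof -
  have nz: "(v1 - 1) * (v0 + 1) \<noteq> 0" "v1 + 1 \<noteq> 0" using pos by auto
  from alt show ?thesis
  proof
    assume a: "u0 = v0"
    have c1: "c' = 1"
    proof -
      have "c' * of_real ((v1 - 1) * (v0 + 1)) = 1 * of_real ((v1 - 1) * (v0 + 1))"
        using R1 a uv by simp
      then show ?thesis by (metis mult_right_cancel of_real_eq_0_iff nz(1))
    qed
    have "odd k \<Longrightarrow> v0 = 1"
    proof -
      assume "odd k"
      then have "- of_real ((v0 - 1) * (v1 + 1)) = (of_real ((v0 - 1) * (v1 + 1)) :: complex)"
        using R2 c1 a uv by simp
      then have "- ((v0 - 1) * (v1 + 1)) = (v0 - 1) * (v1 + 1)"
        by (metis of_real_eq_iff of_real_minus)
      then have "(v0 - 1) * (v1 + 1) = 0" by linarith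
      then show "v0 = 1" using nz by simp
    qed
    then show ?thesis using c1 a by auto
  next
    assume a: "u0 * v0 = 1"
    have u0: "u0 = 1 / v0" using a pos by (simp add: field_simps)
    have c1: "c' = of_real (1 / v0)"
    proof -
      have e: "(u1 - 1) * (u0 + 1) = (1 / v0) * ((v1 - 1) * (v0 + 1))"
        using pos by (simp add: u0 uv field_simps)
      have "c' * of_real ((v1 - 1) * (v0 + 1)) = of_real (1 / v0) * of_real ((v1 - 1) * (v0 + 1))"
        using R1 unfolding e by simp
      then show ?thesis by (metis mult_right_cancel of_real_eq_0_iff nz(1))
    qed
    have "even k \<Longrightarrow> v0 = 1"
    proof -
      assume "even k"
      then have "of_real (1 / v0) * of_real ((v0 - 1) * (v1 + 1)) = (of_real ((u0 - 1) * (u1 + 1)) :: complex)"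
        using R2 c1 by simp
      then have "(1 / v0) * ((v0 - 1) * (v1 + 1)) = (u0 - 1) * (u1 + 1)"
        by (metis of_real_eq_iff of_real_mult)
      then have "(v0 - 1) * (v1 + 1) = (1 - v0) * (v1 + 1)"
        using pos by (simp add: u0 uv field_simps)
      then have "v0 - 1 = 1 - v0" using nz by simp
      then show "v0 = 1" by simp
    qed
    then show ?thesis using c1 a u0 by auto
  qed
qed

definition chi :: "'m::finite lat \<Rightarrow> complex \<Rightarrow> 'm lat \<Rightarrow> complex" where
  "chi al z y = z powi pairing al y"

lemma chi_add: "z \<noteq> 0 \<Longrightarrow> chi al z (a + b) = chi al z a * chi al z b"
  by (simp add: chi_def pairing_add power_int_add)

lemma chi_zero[simp]: "chi al z 0 = 1"
  by (simp add: chi_def)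

lemma chi_sref: "root_datum al alv \<Longrightarrow> chi al z (sref al alv y) = chi al (inverse z) y"
  by (simp add: chi_def pairing_sref power_int_minus power_int_inverse)

lemma chi_alv: "root_datum al alv \<Longrightarrow> chi al z (j *s alv) = z powi (2 * j)"
  by (simp add: chi_def pairing_smult root_datum_def mult.commute)

lemma ev_chi_mult: "z \<noteq> 0 \<Longrightarrow> ev (chi al z) (f * g) = ev (chi al z) f * ev (chi al z) g"
  by (rule ev_mult) (simp add: chi_add)

lemma ev_chi_sact: "root_datum al alv \<Longrightarrow> ev (chi al z) (sact al alv f) = ev (chi al (inverse z)) f"
  by (simp add: ev_sact chi_sref)

lemma ev_one[simp]: "ev ch 1 = ch 0"
  using ev_single[of ch 0 1] by simp

lemma ev_chi_D:
  assumes "root_datum al alv"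
  shows "ev (chi al z) (theta 0 - theta (- (2 *s alv))) = 1 - z powi (-4)"
proof -
  have "- (2 *s alv) = (-2) *s alv" by (simp add: vector_smult_lneg)
  then show ?thesis using chi_alv[OF assms, of z "-2"] by (simp add: ev_diff)
qed

lemma ev_chi_G:
  assumes "root_datum al alv" "z \<noteq> 0"
  shows "ev (chi al z) (Gfac alv q1 q0) = complex_of_real (q1 - 1)
     + z powi (-2) * complex_of_real (sqrt q1 * sqrt q0 - sqrt q1 / sqrt q0)"
proof -
  have "- alv = (-1) *s alv" by (simp add: vector_smult_lneg)
  then have "chi al z (- alv) = z powi (-2)" using chi_alv[OF assms(1), of z "-1"] by simp
  then show ?thesis unfolding Gfac_def
    by (simp add: ev_add ev_chi_mult[OF assms(2)] del: of_real_diff)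
qed

lemma ev_chi_bern:
  assumes rd: "root_datum al alv" and eq: "\<not> in2X al \<Longrightarrow> q1 = q0" and q1: "q1 > 0" and z: "z \<noteq> 0"
  shows "ev (chi al z) (bern al alv q1 q0 y) * (1 - z powi (-4)) =
    (complex_of_real (q1 - 1) + z powi (-2) * complex_of_real (sqrt q1 * sqrt q0 - sqrt q1 / sqrt q0))
      * (chi al z y - chi al (inverse z) y)"
proof -
  have "ev (chi al z) (bern al alv q1 q0 y * (theta 0 - theta (- (2 *s alv)))) =
     ev (chi al z) (Gfac alv q1 q0 * (theta y - theta (sref al alv y)))"
    using bern_spec[OF rd eq q1] by simp
  then have "ev (chi al z) (bern al alv q1 q0 y) * ev (chi al z) (theta 0 - theta (- (2 *s alv))) =
     ev (chi al z) (Gfac alv q1 q0) * ev (chi al z) (theta y - theta (sref al alv y))"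
    by (simp only: ev_chi_mult[OF z])
  then show ?thesis unfolding ev_chi_D[OF rd]
    by (simp only: ev_chi_G[OF rd z] ev_diff ev_theta chi_sref[OF rd])
qed

lemma ev_chi_Qop:
  assumes rd: "root_datum al alv" and eq: "\<not> in2X al \<Longrightarrow> q1 = q0" and q1: "q1 > 0" and z: "z \<noteq> 0"
  shows "ev (chi al z) (Qop al alv q1 q0 f) * (1 - z powi (-4)) =
    (complex_of_real (q1 - 1) + z powi (-2) * complex_of_real (sqrt q1 * sqrt q0 - sqrt q1 / sqrt q0))
      * (ev (chi al z) f - ev (chi al (inverse z)) f)"
proof -
  have "ev (chi al z) (Qop al alv q1 q0 f) =
     (\<Sum>y\<in>Poly_Mapping.keys f. Poly_Mapping.lookup f y * ev (chi al z) (bern al alv q1 q0 y))"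
    by (rule ev_Qop) (simp_all add: chi_add z)
  note evQ = this
  let ?G = "complex_of_real (q1 - 1) + z powi (-2) * complex_of_real (sqrt q1 * sqrt q0 - sqrt q1 / sqrt q0)"
  from evQ have "ev (chi al z) (Qop al alv q1 q0 f) * (1 - z powi (-4)) =
     (\<Sum>y\<in>Poly_Mapping.keys f. Poly_Mapping.lookup f y * (ev (chi al z) (bern al alv q1 q0 y) * (1 - z powi (-4))))"
    by (simp add: sum_distrib_right mult.assoc)
  also have "\<dots> = (\<Sum>y\<in>Poly_Mapping.keys f. Poly_Mapping.lookup f y * (?G * (chi al z y - chi al (inverse z) y)))"
    by (rule sum.cong[OF refl]) (use ev_chi_bern[OF rd eq q1 z] in presburger)
  also have "\<dots> = ?G * ((\<Sum>y\<in>Poly_Mapping.keys f. Poly_Mapping.lookup f y * chi al z y)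
      - (\<Sum>y\<in>Poly_Mapping.keys f. Poly_Mapping.lookup f y * chi al (inverse z) y))"
  proof -
    have "(\<Sum>y\<in>Poly_Mapping.keys f. Poly_Mapping.lookup f y * (?G * (chi al z y - chi al (inverse z) y)))
       = (\<Sum>y\<in>Poly_Mapping.keys f. ?G * (Poly_Mapping.lookup f y * chi al z y - Poly_Mapping.lookup f y * chi al (inverse z) y))"
      by (rule sum.cong[OF refl]) (simp only: right_diff_distrib mult.left_commute)
    also have "\<dots> = ?G * (\<Sum>y\<in>Poly_Mapping.keys f. (Poly_Mapping.lookup f y * chi al z y - Poly_Mapping.lookup f y * chi al (inverse z) y))"
      by (simp only: sum_distrib_left)
    finally show ?thesis by (simp only: sum_subtractf)
  qed
  also have "\<dots> = ?G * (ev (chi al z) f - ev (chi al (inverse z)) f)"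
    by (simp add: ev_def)
  finally show ?thesis .
qed

lemma powi_conv:
  fixes z :: complex
  assumes z: "z \<noteq> 0"
  shows "z powi (2 * j) = (z^2) powi j" "inverse z powi (2 * j) = inverse ((z^2) powi j)"
    "z powi (-4) = inverse (z^2) ^ 2" "z powi (-2) = inverse (z^2)"
    "inverse z powi (-4) = (z^2) ^ 2" "inverse z powi (-2) = z^2"
proof -
  show a: "z powi (2 * j) = (z^2) powi j" by (simp add: power_int_mult)
  show "inverse z powi (2 * j) = inverse ((z^2) powi j)" by (simp add: power_int_mult power_inverse power_int_inverse)
  have m4: "(-4::int) = 2 * (-2)" by simp
  have m2: "(-2::int) = 2 * (-1)" by simp
  show "z powi (-4) = inverse (z^2) ^ 2" unfolding m4 a by (simp add: power_int_minus power_inverse)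
  show "z powi (-2) = inverse (z^2)" unfolding m2 a by (simp add: power_int_minus)
  show "inverse z powi (-4) = (z^2) ^ 2" unfolding m4 by (simp add: power_int_mult power_int_inverse power_int_minus power_inverse)
  show "inverse z powi (-2) = z^2" unfolding m2 by (simp add: power_int_mult power_int_inverse power_int_minus power_inverse)
qed

lemma Id_lemma:
  fixes u1 u0 v1 v0 :: real and X Y c c' :: complex
  assumes X: "X \<noteq> 0" "X^2 \<noteq> 1" and Y: "Y^2 \<noteq> 1" and c: "c^2 = 1"
    and core: "c'^2 * ((of_real (v1 * v0) - (of_real (v1 * v0) - 1 + inverse X * of_real (v1 - v0)) / (1 - inverse X^2)) *
                 (1 + (of_real (v1 * v0) - 1 + inverse X * of_real (v1 - v0)) / (1 - inverse X^2)))
       = (of_real (u1 * u0) - ((of_real (u1 * u0)-1)*Y^2 + of_real (u1 - u0)*c*Y)/(Y^2-1))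
         * (1 + ((of_real (u1 * u0)-1)*Y^2 + of_real (u1 - u0)*c*Y)/(Y^2-1))"
  shows "c'^2 * Fq (of_real v1) (of_real v0) X * (Y^2 - 1)^2 = Fq (of_real u1) (of_real u0) (c * Y) * (X^2 - 1)^2"
proof -
  have r: "(of_real (v1 * v0) - 1 + inverse X * of_real (v1 - v0)) / (1 - inverse X^2)
      = ((of_real v1 * of_real v0 - 1) * X^2 + (of_real v1 - of_real v0) * 1 * X) / (X^2 - 1)"
    using X by (simp add: field_simps power2_eq_square)
  have h1: "(of_real (v1 * v0) - (of_real (v1 * v0) - 1 + inverse X * of_real (v1 - v0)) / (1 - inverse X^2)) *
                 (1 + (of_real (v1 * v0) - 1 + inverse X * of_real (v1 - v0)) / (1 - inverse X^2))
      = Fq (of_real v1) (of_real v0) X / (X^2-1)^2"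
    unfolding r using rho_fact[of 1 X "of_real v1" "of_real v0"] X by simp
  have h2: "(of_real (u1 * u0) - ((of_real (u1 * u0)-1)*Y^2 + of_real (u1 - u0)*c*Y)/(Y^2-1))
         * (1 + ((of_real (u1 * u0)-1)*Y^2 + of_real (u1 - u0)*c*Y)/(Y^2-1))
      = Fq (of_real u1) (of_real u0) (c*Y) / (Y^2-1)^2"
    using rho_fact[OF c Y, of "of_real u1" "of_real u0"] by simp
  have R: "c'^2 * (Fq (of_real v1) (of_real v0) X / (X^2-1)^2) = Fq (of_real u1) (of_real u0) (c*Y) / (Y^2-1)^2"
    using core unfolding h1 h2 .
  have dX: "(X^2-1)^2 \<noteq> 0" and dY: "(Y^2-1)^2 \<noteq> 0" using X Y by auto
  from R dX dY show ?thesis by (simp add: field_simps)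
qed

lemma Qop_theta: "Qop al alv q1 q0 (theta y) = bern al alv q1 q0 y"
  using Qop_cst_theta[of al alv q1 q0 1 y] by simp

lemma sact_theta: "sact al alv (theta y) = theta (sref al alv y)"
  using sact_cst_theta[of al alv 1 y] by simp

lemma cst_uminus: "cst (- a) = - cst a"
  by (simp add: cst_def single_uminus)

lemma smult_cancel_vec: "j *s (x::int^'m) + (- j) *s x = 0"
  by (simp add: vector_sadd_rdistrib[symmetric])

lemma odd_cert:
  fixes b beta t ti s si C a e tk G A Dd :: "'a::comm_ring_1"
  assumes h1: "t * ti = 1" and h2: "s * si = 1" and h3: "tk = C * s * s * t" and h5: "G = a + ti * e"
    and h7: "A = C * e" and h8: "Dd = C * a"
    and h4: "beta * (1 - ti * ti) = G * (si - s)"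
    and h6: "t * b * t + t * tk * (G * t) = b + (A * (t * t) + Dd * t)"
  shows "(b - (s * (C * ((- a) * t)) * si + s * (C * t) * beta)) * (1 - ti * ti) = 0"
proof -
  have z1: "t * ti - 1 = 0" and z2: "s * si - 1 = 0" and z3: "tk - C * s * s * t = 0"
    and z5: "G - (a + ti * e) = 0" and z7: "A - C * e = 0" and z8: "Dd - C * a = 0"
    and z4: "beta * (1 - ti * ti) - G * (si - s) = 0"
    and z6: "(t * b * t + t * tk * (G * t)) - (b + (A * (t * t) + Dd * t)) = 0"
    using assms by simp_all
  have id: "(b - (s * (C * ((- a) * t)) * si + s * (C * t) * beta)) * (1 - ti * ti) =
      ti * ti * ((t * b * t + t * tk * (G * t)) - (b + (A * (t * t) + Dd * t)))
      - C * s * t * t * t * ti * ti * (beta * (1 - ti * ti) - G * (si - s))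
      + ((- (t * t * ti * ti * G))) * (tk - C * s * s * t) + ((- (t * t * t * ti * ti * s * si * C))) * (G - (a + ti * e))
      + ((t * t * ti * ti)) * (A - C * e) + ((t * ti * ti)) * (Dd - C * a)
      + ((C * e) + (- (s * si * C * e)) + (ti * C * a) + (- (ti * s * si * C * a)) + (- (t * s * si * C * a)) + (t * ti * C * e) + (- (t * ti * s * si * C * e)) + (- (t * t * ti * s * si * C * a)) + (- (t * t * ti * ti * s * si * C * e)) + (beta * t * s * C) + (- (beta * t * ti * ti * s * C)) + (beta * t * t * ti * s * C) + (- (beta * t * t * ti * ti * ti * s * C)) + (- (b)) + (- (b * t * ti))) * (t * ti - 1) + ((- (C * e)) + (- (ti * C * a))) * (s * si - 1)"
    by (simp add: algebra_simps)
  show ?thesis unfolding id by (simp only: z1 z2 z3 z4 z5 z6 z7 z8) simp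
qed

lemma even_cert:
  fixes b beta t ti s si G a d tk :: "'a::comm_ring_1"
  assumes h1: "t * ti = 1" and h2: "s * si = 1" and h3: "tk = s * s"
    and h4: "beta * (1 - ti * ti) = G * (si - s)" and h5: "G = a + ti * d"
    and h6: "t * b * t + t * tk * (G * t) = b + (a * (t * t) + d * t)"
  shows "(b - s * beta) * (1 - ti * ti) = 0"
proof -
  have z1: "t * ti - 1 = 0" and z2: "s * si - 1 = 0" and z3: "tk - s * s = 0"
    and z4: "beta * (1 - ti * ti) - G * (si - s) = 0" and z5: "G - a - ti * d = 0"
    and z6: "t * b * t + t * tk * G * t - b - a * t * t - d * t = 0"
    using assms by (simp_all add: algebra_simps)
  have "(b - s * beta) * (1 - ti * ti) =
     ti^2 * ((t * b * t + t * tk * G * t - b - a * t * t - d * t) - s * t^2 * (beta * (1 - ti * ti) - G * (si - s))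
       - G * t^2 * (s * si - 1) - s * beta * (t * ti + 1) * (t * ti - 1) - t^2 * G * (tk - s * s)
       - t^2 * (G - a - ti * d) - d * t * (t * ti - 1))
     - (b - s * beta) * (t * ti + 1) * (t * ti - 1)"
    by (simp add: algebra_simps power2_eq_square)
  then show ?thesis by (simp only: z1 z2 z3 z4 z5 z6) simp
qed

theorem propositionD1:
  fixes al alv :: "int ^ 'n::finite" and al' alv' :: "int ^ 'm::finite"
    and qq lam lams lam' lams' :: real
    and q1 q0 q1' q0' :: real
    and I :: "'n hecke \<Rightarrow> 'm hecke"
    and c c' :: complex and k :: int and n :: nat and b' :: "'m grpalg"
  assumes "root_datum al alv" and "root_datum al' alv'"
    and "qq > 1" and "lam > 0" and "lams > 0" and "lam' > 0" and "lams' > 0"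
    and "\<not> in2X al \<Longrightarrow> lam = lams" and "\<not> in2X al' \<Longrightarrow> lam' = lams'"
    and "q1 = qq powr lam" and "q0 = qq powr lams"
    and "q1' = qq powr lam'" and "q0' = qq powr lams'"
    and "hecke_alg_hom al alv q1 q0 al' alv' q1' q0' I"
    and "c' \<noteq> 0"
    and "I Tgen = hadd (hmult al' alv' q1' q0' (emb (cst c' * theta (k *s alv'))) Tgen) (emb b')"
    and "c \<noteq> 0" and "n > 0"
    and "I (emb (theta alv)) = emb (cst c * theta (int n *s alv'))"
  shows "(even k \<longrightarrow>
           I Tgen = hmult al' alv' q1' q0'
                      (hmult al' alv' q1' q0' (emb (theta ((k div 2) *s alv'))) Tgen)
                      (emb (theta ((- (k div 2)) *s alv')))
           \<and> I (emb (theta alv)) = emb (theta alv')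
           \<and> q1 = q1' \<and> q0 = q0')
       \<and> (odd k \<longrightarrow>
           (let Ts0 = hscale (complex_of_real (sqrt q0' / sqrt q1'))
                        (hadd (hmult al' alv' q1' q0' (emb (theta alv')) Tgen)
                              (hscale (- complex_of_real (q1' - 1)) (emb (theta alv'))))
            in I Tgen = hmult al' alv' q1' q0'
                      (hmult al' alv' q1' q0' (emb (theta (((k - 1) div 2) *s alv'))) Ts0)
                      (emb (theta ((- ((k - 1) div 2)) *s alv'))))
           \<and> I (emb (theta alv)) = emb (theta alv')
           \<and> q1 = q0' \<and> q0 = q1')"
proof -
  note rd = assms(1) and rd' = assms(2)
  have q1g: "q1 > 1" and q0g: "q0 > 1" and q1g': "q1' > 1" and q0g': "q0' > 1"
    using assms(3-7,10-13) by simp_all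
  have eqH: "\<not> in2X al \<Longrightarrow> q1 = q0" using assms(8,10,11) by simp
  have eqH': "\<not> in2X al' \<Longrightarrow> q1' = q0'" using assms(9,12,13) by simp
  have hom: "\<And>a b. I (hadd a b) = hadd (I a) (I b)" "\<And>c a. I (hscale c a) = hscale c (I a)"
     "\<And>a b. I (hmult al alv q1 q0 a b) = hmult al' alv' q1' q0' (I a) (I b)" "I hone = hone"
    using assms(14) unfolding hecke_alg_hom_def by blast+
  define xn where "xn = cst c * theta (int n *s alv')"
  define tk where "tk = cst c' * theta (k *s alv')"
  have IT: "I Tgen = (b', tk)"
    using assms(16) by (simp add: tk_def Tgen_def emb_def hadd_def hmult_pair)
  have IX: "I (emb (theta alv)) = (xn, 0)"
    using assms(19) by (simp add: xn_def emb_def)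
  have E1: "hmult al' alv' q1' q0' (hmult al' alv' q1' q0' (xn, 0) (b', tk)) (xn, 0) =
    hadd (b', tk) (hadd (hscale (complex_of_real (q1 - 1)) (hmult al' alv' q1' q0' (xn, 0) (xn, 0)))
       (hscale (complex_of_real (sqrt q1 * sqrt q0 - sqrt q1 / sqrt q0)) (xn, 0)))"
    using arg_cong[OF H_rel1[OF rd, of q1 q0], of I] by (simp only: hom IT IX)
  have E2: "hmult al' alv' q1' q0' (b', tk) (b', tk) =
      hadd (hscale (complex_of_real (q1 - 1)) (b', tk)) (hscale (complex_of_real q1) hone)"
    using arg_cong[OF H_rel2[OF rd, of q1 q0], of I] by (simp only: hom IT)
  let ?Q = "Qop al' alv' q1' q0'" and ?S = "sact al' alv'"
  have E1f: "xn * b' * xn + xn * tk * ?Q xn = b' + (cst (complex_of_real (q1 - 1)) * (xn * xn)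
      + cst (complex_of_real (sqrt q1 * sqrt q0 - sqrt q1 / sqrt q0)) * xn)"
    using arg_cong[OF E1, of fst] by (simp add: hmult_pair hadd_def hscale_def)
  have E1s: "xn * tk * ?S xn = tk"
    using arg_cong[OF E1, of snd] by (simp add: hmult_pair hadd_def hscale_def)
  have E2f: "b' * b' + tk * ?Q b' + cst (complex_of_real q1') * tk * ?S tk
      = cst (complex_of_real (q1 - 1)) * b' + cst (complex_of_real q1)"
    using arg_cong[OF E2, of fst] by (simp add: hmult_pair hadd_def hscale_def hone_def)
  define u1 where "u1 = sqrt q1 * sqrt q0"
  define u0 where "u0 = sqrt q1 / sqrt q0"
  define v1 where "v1 = sqrt q1' * sqrt q0'"
  define v0 where "v0 = sqrt q1' / sqrt q0'"
  have q1u: "q1 = u1 * u0" and q0u: "q0 = u1 / u0" using q1g q0g by (simp_all add: u1_def u0_def)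
  have q1v: "q1' = v1 * v0" and q0v: "q0' = v1 / v0" using q1g' q0g' by (simp_all add: v1_def v0_def)
  have u0p: "u0 > 0" and v0p: "v0 > 0" using q1g q0g q1g' q0g' by (simp_all add: u0_def v0_def)
  have u1p: "u1 > 0" and v1p: "v1 > 0" using q1g q0g q1g' q0g' by (simp_all add: u1_def v1_def)
  have pos: "u0 > 0" "v0 > 0" "u1 * u0 > 1" "u1 > u0" "v1 * v0 > 1" "v1 > v0"
    using u0p v0p q1g q1g' q1u q1v q0g q0g' q0u q0v by (simp_all add: field_simps)
  define B where "B z = ev (chi al' z) b'" for z
  define W where "W z = ev (chi al' z) (bern al' alv' q1' q0' (int n *s alv'))" for z
  define Qb where "Qb z = ev (chi al' z) (?Q b')" for z
  have ev_xn: "ev (chi al' z) xn = c * z powi (2 * int n)" if z: "z \<noteq> 0" for z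
    unfolding xn_def by (simp add: ev_chi_mult[OF z] chi_alv[OF rd'])
  have ev_tk: "ev (chi al' z) tk = c' * z powi (2 * k)" if z: "z \<noteq> 0" for z
    unfolding tk_def by (simp add: ev_chi_mult[OF z] chi_alv[OF rd'])
  have ev_Sxn: "ev (chi al' z) (?S xn) = c * inverse z powi (2 * int n)" if z: "z \<noteq> 0" for z
    using ev_xn[of "inverse z"] z by (simp add: ev_chi_sact[OF rd'])
  have ev_Stk: "ev (chi al' z) (?S tk) = c' * inverse z powi (2 * k)" if z: "z \<noteq> 0" for z
    using ev_tk[of "inverse z"] z by (simp add: ev_chi_sact[OF rd'])
  have ev_Qxn: "ev (chi al' z) (?Q xn) = c * W z" if z: "z \<noteq> 0" for z
    unfolding xn_def W_def by (simp add: Qop_cst_theta ev_chi_mult[OF z])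
  have S1: "(c * z powi (2 * int n)) * B z * (c * z powi (2 * int n))
      + (c * z powi (2 * int n)) * (c' * z powi (2 * k)) * (c * W z)
      = B z + (complex_of_real (q1 - 1) * ((c * z powi (2 * int n)) * (c * z powi (2 * int n)))
        + complex_of_real (sqrt q1 * sqrt q0 - sqrt q1 / sqrt q0) * (c * z powi (2 * int n)))"
    if z: "z \<noteq> 0" for z
    using arg_cong[OF E1f, of "ev (chi al' z)"]
    by (simp only: ev_add ev_chi_mult[OF z] ev_xn[OF z] ev_tk[OF z] ev_Qxn[OF z] ev_cst chi_zero
        mult_1_right B_def)
  have S1s: "(c * z powi (2 * int n)) * (c' * z powi (2 * k)) * (c * inverse z powi (2 * int n))
      = c' * z powi (2 * k)" if z: "z \<noteq> 0" for z
    using arg_cong[OF E1s, of "ev (chi al' z)"]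
    by (simp only: ev_chi_mult[OF z] ev_xn[OF z] ev_tk[OF z] ev_Sxn[OF z])
  have S2: "B z * B z + (c' * z powi (2 * k)) * Qb z
      + complex_of_real q1' * (c' * z powi (2 * k)) * (c' * inverse z powi (2 * k))
      = complex_of_real (q1 - 1) * B z + complex_of_real q1" if z: "z \<noteq> 0" for z
    using arg_cong[OF E2f, of "ev (chi al' z)"]
    by (simp only: ev_add ev_chi_mult[OF z] ev_tk[OF z] ev_Stk[OF z] ev_cst chi_zero
        mult_1_right B_def Qb_def)
  have SW: "W z * (1 - z powi (-4)) =
    (complex_of_real (q1' - 1) + z powi (-2) * complex_of_real (sqrt q1' * sqrt q0' - sqrt q1' / sqrt q0'))
      * (z powi (2 * int n) - inverse z powi (2 * int n))" if z: "z \<noteq> 0" for z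
    using ev_chi_bern[OF rd' eqH' _ z, of "int n *s alv'"] q1g' unfolding W_def
    by (simp add: chi_alv[OF rd'])
  have SQ: "Qb z * (1 - z powi (-4)) =
    (complex_of_real (q1' - 1) + z powi (-2) * complex_of_real (sqrt q1' * sqrt q0' - sqrt q1' / sqrt q0'))
      * (B z - B (inverse z))" if z: "z \<noteq> 0" for z
    using ev_chi_Qop[OF rd' eqH' _ z, of b'] q1g' unfolding Qb_def B_def by simp
  have c2: "c^2 = 1"
  proof -
    have "c * c' * c = c' * 1" using S1s[of 1] by (simp add: mult_ac)
    then have "c' * (c * c) = c' * 1" by (simp add: mult_ac)
    then show ?thesis using assms(15) by (simp add: power2_eq_square)
  qed
  have Id: "c'^2 * Fq (of_real v1) (of_real v0) X * (X^(2*n) - 1)^2 = Fq (of_real u1) (of_real u0) (c * X^n) * (X^2 - 1)^2"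
    if X: "X \<noteq> 0" "X^2 \<noteq> 1" "X^(2*n) \<noteq> 1" for X
  proof -
    define z where "z = csqrt X"
    have z2: "z^2 = X" by (simp add: z_def)
    have z: "z \<noteq> 0" using X(1) z2 by auto
    have iz: "inverse z \<noteq> 0" using z by simp
    have P: "X powi k \<noteq> 0" using X(1) by simp
    have Y2: "(X^n)^2 \<noteq> 1" using X(3) by (simp add: power_mult[symmetric] mult.commute)
    note cv = powi_conv[OF z, unfolded z2]
    have cn: "(2::int) * int n = 2 * int n" by simp
    have pX: "X powi int n = X^n" by (simp add: power_int_of_nat)
    note cvn = cv(1)[of "int n", unfolded pX] cv(2)[of "int n", unfolded pX]
    have core_res: "c'^2 * ((of_real q1' - (of_real q1' - 1 + inverse X * of_real (v1 - v0)) / (1 - inverse X^2)) *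
                 (1 + (of_real q1' - 1 + inverse X * of_real (v1 - v0)) / (1 - inverse X^2)))
       = (of_real q1 - ((of_real q1 - 1)*(X^n)^2 + of_real (u1 - u0)*c*(X^n))/((X^n)^2-1))
         * (1 + ((of_real q1 - 1)*(X^n)^2 + of_real (u1 - u0)*c*(X^n))/((X^n)^2-1))"
    proof (rule core[where B="B z" and Bt="B (inverse z)" and W="W z" and Wt="W (inverse z)" and Qb="Qb z"
          and P="X powi k"])
      show "c * X ^ n * B z * (c * X ^ n) + c * X ^ n * (c' * X powi k) * (c * W z) =
        B z + ((complex_of_real q1 - 1) * (c * X ^ n * (c * X ^ n)) + complex_of_real (u1 - u0) * (c * X ^ n))"
        using S1[OF z] by (simp add: cvn cv(1) u1_def u0_def)
      show "c * inverse (X ^ n) * B (inverse z) * (c * inverse (X ^ n)) +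
          c * inverse (X ^ n) * (c' * inverse (X powi k)) * (c * W (inverse z)) =
        B (inverse z) + ((complex_of_real q1 - 1) * (c * inverse (X ^ n) * (c * inverse (X ^ n))) +
          complex_of_real (u1 - u0) * (c * inverse (X ^ n)))"
        using S1[OF iz] by (simp add: cvn cv(2) u1_def u0_def)
      show "W z * (1 - inverse X ^ 2) = (complex_of_real q1' - 1 + inverse X * complex_of_real (v1 - v0)) * (X ^ n - inverse (X ^ n))"
        using SW[OF z] unfolding cvn cv by (simp add: v1_def v0_def mult.commute)
      show "W (inverse z) * (1 - X ^ 2) = (complex_of_real q1' - 1 + X * complex_of_real (v1 - v0)) * (inverse (X ^ n) - X ^ n)"
        using SW[OF iz] unfolding inverse_inverse_eq cvn cv by (simp add: v1_def v0_def mult.commute)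
      show "B z * B z + c' * X powi k * Qb z + complex_of_real q1' * (c' * X powi k) * (c' * inverse (X powi k)) =
          (complex_of_real q1 - 1) * B z + complex_of_real q1"
        using S2[OF z] by (simp add: cv)
      show "Qb z * (1 - inverse X ^ 2) = (complex_of_real q1' - 1 + inverse X * complex_of_real (v1 - v0)) * (B z - B (inverse z))"
        using SQ[OF z] by (simp add: cv v1_def v0_def mult.commute)
    qed (use X P Y2 c2 in auto)
    show ?thesis
      using Id_lemma[OF X(1,2) Y2 c2, of c' v1 v0 u1 u0] core_res
      by (simp add: q1u q1v power_mult[symmetric] mult.commute[of n 2])
  qed
  have n1: "n = 1" by (rule n_is_1[OF pos c2 assms(15) assms(18) Id])
  have Id1: "c'^2 * Fq (of_real v1) (of_real v0) X * (X^2 - 1)^2 = Fq (of_real u1) (of_real u0) (c * X) * (X^2 - 1)^2"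
    if "X \<noteq> 0" "X^2 \<noteq> 1" for X
    using Id[of X] that by (simp add: n1)
  have rr: "c = 1 \<and> u1 = v1 \<and> (u0 = v0 \<or> u0 * v0 = 1)" by (rule roots1[OF pos c2 assms(15) Id1])
  then have c1: "c = 1" and uv: "u1 = v1" and alt: "u0 = v0 \<or> u0 * v0 = 1" by auto
  have chi1: "chi al' z alv' = z powi 2" for z using chi_alv[OF rd', of z 1] by simp
  have Wv: "W z = (complex_of_real (q1' - 1) + z powi (-2) * complex_of_real (sqrt q1' * sqrt q0' - sqrt q1' / sqrt q0'))
      * z powi 2" if z: "z \<noteq> 0" for z
    unfolding W_def n1 using bern_alv[OF rd', of q1' q0']
    by (simp add: ev_chi_mult[OF z] ev_chi_G[OF rd' z] chi1)
  have R1: "c' * (complex_of_real (q1' - 1) + complex_of_real (sqrt q1' * sqrt q0' - sqrt q1' / sqrt q0'))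
      = complex_of_real (q1 - 1) + complex_of_real (sqrt q1 * sqrt q0 - sqrt q1 / sqrt q0)"
    using S1[of 1] Wv[of 1] by (simp add: c1 n1)
  have ii: "\<i> powi 2 = -1" "\<i> powi (-2) = -1" "\<i> powi (2 * k) = (-1) powi k"
    by (simp_all add: power_int_mult power_int_minus)
  have R2: "c' * (-1) powi k * (complex_of_real (q1' - 1) - complex_of_real (sqrt q1' * sqrt q0' - sqrt q1' / sqrt q0'))
      = complex_of_real (q1 - 1) - complex_of_real (sqrt q1 * sqrt q0 - sqrt q1 / sqrt q0)"
  proof -
    have Wi: "W \<i> = - (complex_of_real (q1' - 1) - complex_of_real (sqrt q1' * sqrt q0' - sqrt q1' / sqrt q0'))"
      using Wv[of \<i>] by (simp add: ii algebra_simps)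
    show ?thesis using S1[of \<i>] unfolding ii(3) Wi by (simp add: c1 n1 ii algebra_simps)
  qed
  have fp: "(even k \<longrightarrow> c' = 1 \<and> u0 = v0) \<and> (odd k \<longrightarrow> c' = of_real (1 / v0) \<and> u0 * v0 = 1)"
  proof (rule final_params[OF pos(1,2) _ uv alt])
    show "v1 > 1" using gt1_aux[of v0 v1] pos by simp
    have e1: "(v1 - 1) * (v0 + 1) = (q1' - 1) + (sqrt q1' * sqrt q0' - sqrt q1' / sqrt q0')"
    proof -
      have "(v1 - 1) * (v0 + 1) = (v1 * v0 - 1) + (v1 - v0)" by (simp add: algebra_simps)
      then show ?thesis unfolding q1v[symmetric] by (simp add: v1_def v0_def)
    qed
    have e2: "(u1 - 1) * (u0 + 1) = (q1 - 1) + (sqrt q1 * sqrt q0 - sqrt q1 / sqrt q0)"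
    proof -
      have "(u1 - 1) * (u0 + 1) = (u1 * u0 - 1) + (u1 - u0)" by (simp add: algebra_simps)
      then show ?thesis unfolding q1u[symmetric] by (simp add: u1_def u0_def)
    qed
    show "c' * of_real ((v1 - 1) * (v0 + 1)) = of_real ((u1 - 1) * (u0 + 1))"
      unfolding e1 e2 using R1 by simp
    have e3: "(v0 - 1) * (v1 + 1) = (q1' - 1) - (sqrt q1' * sqrt q0' - sqrt q1' / sqrt q0')"
    proof -
      have "(v0 - 1) * (v1 + 1) = (v1 * v0 - 1) - (v1 - v0)" by (simp add: algebra_simps)
      then show ?thesis unfolding q1v[symmetric] by (simp add: v1_def v0_def)
    qed
    have e4: "(u0 - 1) * (u1 + 1) = (q1 - 1) - (sqrt q1 * sqrt q0 - sqrt q1 / sqrt q0)"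
    proof -
      have "(u0 - 1) * (u1 + 1) = (u1 * u0 - 1) - (u1 - u0)" by (simp add: algebra_simps)
      then show ?thesis unfolding q1u[symmetric] by (simp add: u1_def u0_def)
    qed
    have pk: "(-1::complex) powi k = (if even k then 1 else -1)"
      by (simp add: power_int_minus_left)
    show "c' * (if even k then 1 else -1) * of_real ((v0 - 1) * (v1 + 1)) = of_real ((u0 - 1) * (u1 + 1))"
      unfolding e3 e4 pk[symmetric] using R2 by simp
  qed
  have xn1: "xn = theta alv'" by (simp add: xn_def c1 n1)
  have IX': "I (emb (theta alv)) = emb (theta alv')" using IX xn1 by (simp add: emb_def)
  have Gt: "?Q (theta alv') = Gfac alv' q1' q0' * theta alv'"
    using bern_alv[OF rd', of q1' q0'] by (simp add: Qop_theta)
  have E1f': "theta alv' * b' * theta alv' + theta alv' * tk * (Gfac alv' q1' q0' * theta alv') =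
     b' + (cst (complex_of_real (q1 - 1)) * (theta alv' * theta alv')
       + cst (complex_of_real (sqrt q1 * sqrt q0 - sqrt q1 / sqrt q0)) * theta alv')"
    using E1f unfolding xn1 Gt .
  have tti: "theta alv' * theta (- alv') = 1" by (simp add: theta_mult)
  have Dt: "theta 0 - theta (- (2 *s alv')) = 1 - theta (- alv') * theta (- alv')"
    by (simp add: theta_mult two_smult algebra_simps)
  have wnz: "- (2 *s alv') \<noteq> 0" using alv_nz[OF rd'] by simp
  have Gd: "Gfac alv' q1' q0' = cst (complex_of_real (q1' - 1))
      + theta (- alv') * cst (complex_of_real (sqrt q1' * sqrt q0' - sqrt q1' / sqrt q0'))"
    by (simp add: Gfac_def)
  have RHS: "hmult al' alv' q1' q0' (hmult al' alv' q1' q0' (emb (theta (j *s alv'))) (f, g)) (emb (theta ((- j) *s alv')))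
     = (theta (j *s alv') * f * theta ((- j) *s alv') + theta (j *s alv') * g * bern al' alv' q1' q0' ((- j) *s alv'),
        theta (j *s alv') * g * theta (j *s alv'))" for j f g
    by (simp add: emb_def hmult_pair Qop_theta sact_theta sref_smult[OF rd'])
  have bspec: "bern al' alv' q1' q0' ((- j) *s alv') * (1 - theta (- alv') * theta (- alv'))
      = Gfac alv' q1' q0' * (theta ((- j) *s alv') - theta (j *s alv'))" for j
    using bern_spec[OF rd' eqH', of "(- j) *s alv'"] q1g' unfolding Dt by (simp add: sref_smult[OF rd'])
  have ssi: "theta (j *s alv') * theta ((- j) *s alv') = 1" for j
    by (simp add: theta_mult smult_cancel_vec)
  show ?thesis
  proof (intro conjI impI)
    assume ke: "even k"
    have c'1: "c' = 1" and u0v0: "u0 = v0" using fp ke by auto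
    have qe1: "q1 = q1'" using q1u q1v uv u0v0 by simp
    have qe0: "q0 = q0'" using q0u q0v uv u0v0 by simp
    define j where "j = k div 2"
    have kj: "k = j + j" using ke by (simp add: j_def)
    have tkj: "tk = theta (j *s alv') * theta (j *s alv')"
      unfolding tk_def c'1 kj vector_sadd_rdistrib theta_mult[symmetric] by simp
    have "(b' - theta (j *s alv') * bern al' alv' q1' q0' ((- j) *s alv')) * (1 - theta (- alv') * theta (- alv')) = 0"
      by (rule even_cert[OF tti ssi tkj bspec Gd]) (use E1f' in \<open>simp only: qe1 qe0\<close>)
    then have "(b' - theta (j *s alv') * bern al' alv' q1' q0' ((- j) *s alv')) * (1 - theta (- (2 *s alv'))) = 0"
      using Dt by simp
    then have "b' - theta (j *s alv') * bern al' alv' q1' q0' ((- j) *s alv') = 0"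
      by (rule cancel_shift[OF wnz])
    then have bj: "b' = theta (j *s alv') * bern al' alv' q1' q0' ((- j) *s alv')" by simp
    show "I Tgen = hmult al' alv' q1' q0'
                      (hmult al' alv' q1' q0' (emb (theta ((k div 2) *s alv'))) Tgen)
                      (emb (theta ((- (k div 2)) *s alv')))"
      unfolding j_def[symmetric] Tgen_def RHS IT[unfolded Tgen_def] using bj tkj by simp
    show "I (emb (theta alv)) = emb (theta alv')" by (rule IX')
    show "q1 = q1'" by (rule qe1)
    show "q0 = q0'" by (rule qe0)
  next
    assume ko: "odd k"
    show "I (emb (theta alv)) = emb (theta alv')" by (rule IX')
    have c'v: "c' = of_real (1 / v0)" and u0v0: "u0 * v0 = 1" using fp ko by auto
    have u0e: "u0 = 1 / v0" using u0v0 v0p by (simp add: field_simps)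
    have qA: "q1 = q0'" using q1u q0v uv u0e by simp
    have qB: "q0 = q1'" using q0u q1v uv u0e by simp
    have gam: "complex_of_real (sqrt q0' / sqrt q1') = c'" by (simp add: c'v v0_def)
    define j where "j = (k - 1) div 2"
    have kj: "k = j + j + 1" using ko by (simp add: j_def)
    have h3: "tk = cst c' * theta (j *s alv') * theta (j *s alv') * theta alv'"
      unfolding tk_def kj vector_sadd_rdistrib theta_mult[symmetric] by (simp add: mult.assoc)
    have d'e: "sqrt q1' * sqrt q0' - sqrt q1' / sqrt q0' = v1 - v0" by (simp add: v1_def v0_def)
    have de: "sqrt q1 * sqrt q0 - sqrt q1 / sqrt q0 = u1 - u0" by (simp add: u1_def u0_def)
    have h7: "cst (complex_of_real (q1 - 1)) = cst c' * cst (complex_of_real (sqrt q1' * sqrt q0' - sqrt q1' / sqrt q0'))"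
    proof -
      have "q1 - 1 = (1 / v0) * (v1 - v0)" using qA q0v v0p by (simp add: field_simps)
      then show ?thesis unfolding cst_mult d'e c'v by simp
    qed
    have h8: "cst (complex_of_real (sqrt q1 * sqrt q0 - sqrt q1 / sqrt q0)) = cst c' * cst (complex_of_real (q1' - 1))"
    proof -
      have "u1 - u0 = (1 / v0) * (q1' - 1)" using uv u0e q1v v0p by (simp add: field_simps)
      then show ?thesis unfolding cst_mult de c'v by simp
    qed
    have "(b' - (theta (j *s alv') * (cst c' * ((- cst (complex_of_real (q1' - 1))) * theta alv')) * theta ((- j) *s alv')
        + theta (j *s alv') * (cst c' * theta alv') * bern al' alv' q1' q0' ((- j) *s alv')))
        * (1 - theta (- alv') * theta (- alv')) = 0"
      by (rule odd_cert[OF tti ssi h3 Gd h7 h8 bspec E1f'])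
    then have "(b' - (theta (j *s alv') * (cst c' * ((- cst (complex_of_real (q1' - 1))) * theta alv')) * theta ((- j) *s alv')
        + theta (j *s alv') * (cst c' * theta alv') * bern al' alv' q1' q0' ((- j) *s alv')))
        * (1 - theta (- (2 *s alv'))) = 0"
      using Dt by simp
    then have "b' - (theta (j *s alv') * (cst c' * ((- cst (complex_of_real (q1' - 1))) * theta alv')) * theta ((- j) *s alv')
        + theta (j *s alv') * (cst c' * theta alv') * bern al' alv' q1' q0' ((- j) *s alv')) = 0"
      by (rule cancel_shift[OF wnz])
    then have bj: "b' = theta (j *s alv') * (cst c' * ((- cst (complex_of_real (q1' - 1))) * theta alv')) * theta ((- j) *s alv')
        + theta (j *s alv') * (cst c' * theta alv') * bern al' alv' q1' q0' ((- j) *s alv')" by simp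
    have Ts: "hscale (complex_of_real (sqrt q0' / sqrt q1'))
                        (hadd (hmult al' alv' q1' q0' (emb (theta alv')) Tgen)
                              (hscale (- complex_of_real (q1' - 1)) (emb (theta alv'))))
        = (cst c' * ((- cst (complex_of_real (q1' - 1))) * theta alv'), cst c' * theta alv')"
      unfolding gam hscale_def cst_uminus by (simp add: hadd_def emb_def Tgen_def hmult_pair)
    show "let Ts0 = hscale (complex_of_real (sqrt q0' / sqrt q1'))
                        (hadd (hmult al' alv' q1' q0' (emb (theta alv')) Tgen)
                              (hscale (- complex_of_real (q1' - 1)) (emb (theta alv'))))
            in I Tgen = hmult al' alv' q1' q0'
                      (hmult al' alv' q1' q0' (emb (theta (((k - 1) div 2) *s alv'))) Ts0)
                      (emb (theta ((- ((k - 1) div 2)) *s alv')))"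
      unfolding Let_def Ts j_def[symmetric] RHS IT using bj h3 by (simp add: mult_ac)
    show "q1 = q0'" by (rule qA)
    show "q0 = q1'" by (rule qB)
  qed
qed

end
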